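(* Let $(M,g)$ be a Lorentzian manifold of dimension $n+2$, $p\in M$, and let $T_{abcd}$ be a rank 4 tensor at $p$ with $T_{abcd}=-T_{bacd}=T_{cdab}$. Suppose there is a null frame $(\ell,n,m_3,\dots,m_{n+2})$ of $T_pM$ with respect to which all frame components of $T_{abcd}$ of strictly positive boost weight vanish (i.e. $T$ is of primary alignment type II or more special). Let $\mathsf T:\wedge^2T_pM\to\wedge^2T_pM$, $F^{ab}\mapsto \tfrac12 T^{ab}{}_{cd}F^{cd}$, and $\mathsf T^s:S^2(T_pM)\to S^2(T_pM)$, $Z^{ab}\mapsto T^{a}{}_{c}{}^{b}{}_{d}Z^{cd}$. If both $\mathsf T$ and $\mathsf T^s$ are nilpotent, then $T_{abcd}$ is of type III or N, i.e. a null frame exists in which all components of $T_{abcd}$ of boost weight $0$, $1$ and $2$ vanish.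
   Context: A null frame $(\ell,n,m_i)$ consists of null vectors $\ell,n$ with $g(\ell,n)=1$ and orthonormal spacelike vectors $m_i$ orthogonal to $\ell,n$. Frame index $0$ refers to $\ell$, index $1$ to $n$, and $i,j,\dots$ to the $m_i$. The boost weight of a frame component $T_{A_1A_2A_3A_4}$ is the number of indices equal to $0$ minus the number of indices equal to $1$. $\wedge^2T_pM$ denotes contravariant bivectors and $S^2(T_pM)$ symmetric contravariant 2-tensors at $p$. *)

theory Defs
  imports "HOL-Analysis.Analysis"
begin

text \<open>The tangent space T_pM is modelled as real^'d (dimension CARD('d) = n+2).
  The metric g and the covariant tensor T are given by their components
  in the standard coordinate basis of real^'d.\<close>

definition gform :: "('d::finite \<Rightarrow> 'd \<Rightarrow> real) \<Rightarrow> real^'d \<Rightarrow> real^'d \<Rightarrow> real" where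
  "gform g u v = (\<Sum>a\<in>UNIV. \<Sum>b\<in>UNIV. g a b * u$a * v$b)"

definition lorentzian :: "('d::finite \<Rightarrow> 'd \<Rightarrow> real) \<Rightarrow> bool" where
  "lorentzian g \<longleftrightarrow> (\<forall>a b. g a b = g b a) \<and>
     (\<exists>(e :: 'd \<Rightarrow> real^'d) t. \<forall>i j. gform g (e i) (e j) =
        (if i \<noteq> j then 0 else if i = t then -1 else 1))"

definition ginv :: "('d::finite \<Rightarrow> 'd \<Rightarrow> real) \<Rightarrow> 'd \<Rightarrow> 'd \<Rightarrow> real" where
  "ginv g a b = matrix_inv (\<chi> i j. g i j) $ a $ b"

definition tform :: "('d::finite \<Rightarrow> 'd \<Rightarrow> 'd \<Rightarrow> 'd \<Rightarrow> real) \<Rightarrow>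
    real^'d \<Rightarrow> real^'d \<Rightarrow> real^'d \<Rightarrow> real^'d \<Rightarrow> real" where
  "tform T u v w z = (\<Sum>a\<in>UNIV. \<Sum>b\<in>UNIV. \<Sum>c\<in>UNIV. \<Sum>d\<in>UNIV.
       T a b c d * u$a * v$b * w$c * z$d)"

text \<open>Frame indices: FL = 0 (ell), FN = 1 (n), FM i = m_{i+3}, i < n.\<close>
datatype fidx = FL | FN | FM nat

definition fidx_ok :: "nat \<Rightarrow> fidx \<Rightarrow> bool" where
  "fidx_ok k A = (case A of FM i \<Rightarrow> i < k | _ \<Rightarrow> True)"

fun bw :: "fidx \<Rightarrow> int" where
  "bw FL = 1" | "bw FN = -1" | "bw (FM i) = 0"

fun fvec :: "real^'d \<Rightarrow> real^'d \<Rightarrow> (nat \<Rightarrow> real^'d) \<Rightarrow> fidx \<Rightarrow> real^'d" where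
  "fvec l nv m FL = l" | "fvec l nv m FN = nv" | "fvec l nv m (FM i) = m i"

definition null_frame :: "('d::finite \<Rightarrow> 'd \<Rightarrow> real) \<Rightarrow> real^'d \<Rightarrow> real^'d \<Rightarrow> (nat \<Rightarrow> real^'d) \<Rightarrow> bool" where
  "null_frame g l nv m \<longleftrightarrow>
     gform g l l = 0 \<and> gform g nv nv = 0 \<and> gform g l nv = 1 \<and>
     (\<forall>i < CARD('d) - 2. gform g l (m i) = 0 \<and> gform g nv (m i) = 0) \<and>
     (\<forall>i < CARD('d) - 2. \<forall>j < CARD('d) - 2. gform g (m i) (m j) = (if i = j then 1 else 0))"

definition fcomp :: "('d::finite \<Rightarrow> 'd \<Rightarrow> 'd \<Rightarrow> 'd \<Rightarrow> real) \<Rightarrow> real^'d \<Rightarrow> real^'d \<Rightarrow> (nat \<Rightarrow> real^'d)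
    \<Rightarrow> fidx \<Rightarrow> fidx \<Rightarrow> fidx \<Rightarrow> fidx \<Rightarrow> real" where
  "fcomp T l nv m A B C D = tform T (fvec l nv m A) (fvec l nv m B) (fvec l nv m C) (fvec l nv m D)"

definition comps_vanish :: "('d::finite \<Rightarrow> 'd \<Rightarrow> 'd \<Rightarrow> 'd \<Rightarrow> real) \<Rightarrow> real^'d \<Rightarrow> real^'d \<Rightarrow> (nat \<Rightarrow> real^'d)
    \<Rightarrow> int set \<Rightarrow> bool" where
  "comps_vanish T l nv m W \<longleftrightarrow>
     (\<forall>A B C D. fidx_ok (CARD('d) - 2) A \<and> fidx_ok (CARD('d) - 2) B \<and>
        fidx_ok (CARD('d) - 2) C \<and> fidx_ok (CARD('d) - 2) D \<and>
        bw A + bw B + bw C + bw D \<in> W \<longrightarrow> fcomp T l nv m A B C D = 0)"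

definition bivectors :: "('d::finite \<Rightarrow> 'd \<Rightarrow> real) set" where
  "bivectors = {F. \<forall>a b. F a b = - F b a}"

definition sym2 :: "('d::finite \<Rightarrow> 'd \<Rightarrow> real) set" where
  "sym2 = {Z. \<forall>a b. Z a b = Z b a}"

definition Top :: "('d::finite \<Rightarrow> 'd \<Rightarrow> real) \<Rightarrow> ('d \<Rightarrow> 'd \<Rightarrow> 'd \<Rightarrow> 'd \<Rightarrow> real) \<Rightarrow>
    ('d \<Rightarrow> 'd \<Rightarrow> real) \<Rightarrow> ('d \<Rightarrow> 'd \<Rightarrow> real)" where
  "Top g T F = (\<lambda>a b. (1/2) * (\<Sum>e\<in>UNIV. \<Sum>f\<in>UNIV. \<Sum>c\<in>UNIV. \<Sum>d\<in>UNIV.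
      ginv g a e * ginv g b f * T e f c d * F c d))"

definition Tsop :: "('d::finite \<Rightarrow> 'd \<Rightarrow> real) \<Rightarrow> ('d \<Rightarrow> 'd \<Rightarrow> 'd \<Rightarrow> 'd \<Rightarrow> real) \<Rightarrow>
    ('d \<Rightarrow> 'd \<Rightarrow> real) \<Rightarrow> ('d \<Rightarrow> 'd \<Rightarrow> real)" where
  "Tsop g T Z = (\<lambda>a b. (\<Sum>e\<in>UNIV. \<Sum>f\<in>UNIV. \<Sum>c\<in>UNIV. \<Sum>d\<in>UNIV.
      ginv g a e * ginv g b f * T e c f d * Z c d))"

definition nilpotent_on :: "('d \<Rightarrow> 'd \<Rightarrow> real) set \<Rightarrow> (('d \<Rightarrow> 'd \<Rightarrow> real) \<Rightarrow> ('d \<Rightarrow> 'd \<Rightarrow> real)) \<Rightarrow> bool" where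
  "nilpotent_on S f \<longleftrightarrow> (\<exists>k. \<forall>x\<in>S. (f ^^ k) x = (\<lambda>a b. 0))"

end

theory Submission
  imports Defs
begin

definition Iset :: "nat \<Rightarrow> fidx set" where "Iset n = {A. fidx_ok n A}"

lemma Iset_eq: "Iset n = {FL, FN} \<union> FM ` {..<n}"
  by (auto simp: Iset_def fidx_ok_def split: fidx.splits) (metis fidx.exhaust imageI lessThan_iff)

lemma finite_Iset[simp]: "finite (Iset n)" by (simp add: Iset_eq)

lemma in_Iset[simp]: "FL \<in> Iset n" "FN \<in> Iset n" "FM i \<in> Iset n \<longleftrightarrow> i < n"
  by (auto simp: Iset_def fidx_ok_def)

lemma sum_Iset: "sum f (Iset n) = f FL + f FN + (\<Sum>j<n. f (FM j))"
proof -
  have "sum f (Iset n) = sum f {FL, FN} + sum f (FM ` {..<n})"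
    unfolding Iset_eq by (rule sum.union_disjoint) auto
  also have "sum f (FM ` {..<n}) = (\<Sum>j<n. f (FM j))"
    by (subst sum.reindex) (auto simp: inj_on_def)
  finally show ?thesis by simp
qed

type_synonym arr = "fidx \<Rightarrow> fidx \<Rightarrow> real"

fun bar :: "fidx \<Rightarrow> fidx" where
  "bar FL = FN" | "bar FN = FL" | "bar (FM i) = FM i"

lemma bar_bar[simp]: "bar (bar A) = A" by (cases A) auto
lemma bw_bar[simp]: "bw (bar A) = - bw A" by (cases A) auto
lemma bar_Iset[simp]: "bar A \<in> Iset n \<longleftrightarrow> A \<in> Iset n" by (cases A) auto

lemma sum_bar: "(\<Sum>A\<in>Iset n. f (bar A)) = (\<Sum>A\<in>Iset n. f A)"
  by (rule sum.reindex_bij_witness[where i=bar and j=bar]) auto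

definition lev :: "fidx \<Rightarrow> fidx \<Rightarrow> int" where "lev A B = bw A + bw B"

definition Mgen :: "nat \<Rightarrow> (fidx \<Rightarrow> fidx \<Rightarrow> fidx \<Rightarrow> fidx \<Rightarrow> real) \<Rightarrow> arr \<Rightarrow> arr" where
  "Mgen n K z = (\<lambda>A B. if A \<in> Iset n \<and> B \<in> Iset n then
      (\<Sum>C\<in>Iset n. \<Sum>D\<in>Iset n. K A B C D * z C D) else 0)"

definition Proj :: "int \<Rightarrow> arr \<Rightarrow> arr" where
  "Proj k z = (\<lambda>A B. if lev A B = k then z A B else 0)"

definition Vge :: "int \<Rightarrow> arr \<Rightarrow> bool" where
  "Vge k z \<longleftrightarrow> (\<forall>A B. lev A B < k \<longrightarrow> z A B = 0)"

definition tri :: "nat \<Rightarrow> (fidx \<Rightarrow> fidx \<Rightarrow> fidx \<Rightarrow> fidx \<Rightarrow> real) \<Rightarrow> bool" where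
  "tri n K \<longleftrightarrow> (\<forall>A B C D. A \<in> Iset n \<and> B \<in> Iset n \<and> C \<in> Iset n \<and> D \<in> Iset n \<and>
      lev C D > lev A B \<longrightarrow> K A B C D = 0)"

lemma Mgen_Vge: assumes "tri n K" "Vge k z" shows "Vge k (Mgen n K z)"
  unfolding Vge_def
proof (intro allI impI)
  fix A B assume "lev A B < k"
  have "\<And>C D. C \<in> Iset n \<Longrightarrow> D \<in> Iset n \<Longrightarrow> A \<in> Iset n \<Longrightarrow> B \<in> Iset n \<Longrightarrow> K A B C D * z C D = 0"
  proof -
    fix C D assume *: "C \<in> Iset n" "D \<in> Iset n" "A \<in> Iset n" "B \<in> Iset n"
    show "K A B C D * z C D = 0"
    proof (cases "lev C D < k")
      case True thus ?thesis using assms(2) by (simp add: Vge_def)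
    next
      case False thus ?thesis using assms(1) * \<open>lev A B < k\<close> unfolding tri_def by auto
    qed
  qed
  thus "Mgen n K z A B = 0" unfolding Mgen_def by (auto intro!: sum.neutral)
qed

lemma Mgen_Proj: assumes "tri n K" "Vge k z"
  shows "Proj k (Mgen n K z) = Proj k (Mgen n K (Proj k z))"
proof (intro ext)
  fix A B
  show "Proj k (Mgen n K z) A B = Proj k (Mgen n K (Proj k z)) A B"
  proof (cases "lev A B = k \<and> A \<in> Iset n \<and> B \<in> Iset n")
    case True
    have eq: "\<And>C D. C \<in> Iset n \<Longrightarrow> D \<in> Iset n \<Longrightarrow> K A B C D * z C D = K A B C D * Proj k z C D"
    proof -
      fix C D assume *: "C \<in> Iset n" "D \<in> Iset n"
      consider "lev C D < k" | "lev C D = k" | "lev C D > k" by linarith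
      thus "K A B C D * z C D = K A B C D * Proj k z C D"
      proof cases
        case 1 thus ?thesis using assms(2) by (simp add: Vge_def Proj_def)
      next
        case 2 thus ?thesis by (simp add: Proj_def)
      next
        case 3 thus ?thesis using assms(1) * True unfolding tri_def by auto
      qed
    qed
    have "(\<Sum>C\<in>Iset n. \<Sum>D\<in>Iset n. K A B C D * z C D) = (\<Sum>C\<in>Iset n. \<Sum>D\<in>Iset n. K A B C D * Proj k z C D)"
      by (intro sum.cong refl) (use eq in auto)
    thus ?thesis using True by (simp add: Proj_def Mgen_def)
  next
    case False thus ?thesis by (auto simp: Proj_def Mgen_def)
  qed
qed

lemma Vge_Proj: "Proj k w = w \<Longrightarrow> Vge k w"
  unfolding Vge_def by (metis Proj_def less_irrefl)

lemma Mgen_iter: assumes "tri n K" "Vge k z"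
  shows "Vge k ((Mgen n K ^^ j) z) \<and> Proj k ((Mgen n K ^^ j) z) = ((Proj k \<circ> Mgen n K) ^^ j) (Proj k z)"
proof (induction j)
  case 0 thus ?case using assms by simp
next
  case (Suc j)
  have v: "Vge k ((Mgen n K ^^ j) z)" using Suc by simp
  show ?case
    using Mgen_Vge[OF assms(1) v] Mgen_Proj[OF assms(1) v] Suc by simp
qed

lemma level_nil:
  assumes "tri n K" and nil: "\<forall>z. P z \<longrightarrow> (Mgen n K ^^ j) z = (\<lambda>A B. 0)"
    and "P w" "Proj k w = w"
  shows "((Proj k \<circ> Mgen n K) ^^ j) w = (\<lambda>A B. 0)"
proof -
  have "((Proj k \<circ> Mgen n K) ^^ j) w = ((Proj k \<circ> Mgen n K) ^^ j) (Proj k w)" using assms by simp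
  also have "\<dots> = Proj k ((Mgen n K ^^ j) w)"
    using Mgen_iter[OF assms(1) Vge_Proj[OF assms(4)]] by simp
  also have "\<dots> = (\<lambda>A B. 0)" using nil assms(3) by (simp add: Proj_def)
  finally show ?thesis .
qed

lemma funpow_in: "\<forall>x\<in>S. f x \<in> S \<Longrightarrow> x \<in> S \<Longrightarrow> (f ^^ k) x \<in> S"
  by (induction k) auto

lemma sa_nil:
  fixes f :: "'v \<Rightarrow> 'v" and Bf :: "'v \<Rightarrow> 'v \<Rightarrow> real"
  assumes inv: "\<forall>x\<in>S. f x \<in> S"
    and adj: "\<forall>x\<in>S. \<forall>y\<in>S. Bf x (f y) = Bf (f x) y"
    and zero: "\<forall>x\<in>S. Bf x z0 = 0"
    and pos: "\<forall>x\<in>S. Bf x x = 0 \<longrightarrow> x = z0"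
  shows "(\<forall>x\<in>S. (f ^^ k) x = z0) \<Longrightarrow> (\<forall>x\<in>S. f x = z0)"
proof (induction k)
  case 0
  then show ?case using inv by (metis funpow_0)
next
  case (Suc k)
  show ?case
  proof (cases k)
    case 0 thus ?thesis using Suc.prems by simp
  next
    case (Suc k')
    have "\<forall>x\<in>S. (f ^^ k) x = z0"
    proof
      fix x assume x: "x \<in> S"
      define u where "u = (f ^^ k') x"
      have u: "u \<in> S" using funpow_in[OF inv x] u_def by simp
      have y: "(f ^^ k) x = f u" using Suc u_def by simp
      have "Bf (f u) (f u) = Bf u (f (f u))" using adj u inv by simp
      also have "f (f u) = (f ^^ Suc k) x" using y by simp
      also have "\<dots> = z0" using Suc.prems x by blast
      finally have "Bf (f u) (f u) = 0" using zero u by simp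
      thus "(f ^^ k) x = z0" using pos inv u y by simp
    qed
    thus ?thesis using Suc.IH by blast
  qed
qed

definition supp :: "nat \<Rightarrow> arr \<Rightarrow> bool" where
  "supp n z \<longleftrightarrow> (\<forall>A B. A \<notin> Iset n \<or> B \<notin> Iset n \<longrightarrow> z A B = 0)"

definition Gf :: "nat \<Rightarrow> arr \<Rightarrow> arr \<Rightarrow> real" where
  "Gf n z w = (\<Sum>A\<in>Iset n. \<Sum>B\<in>Iset n. z A B * w (bar A) (bar B))"

lemma swap4: "(\<Sum>a\<in>X. \<Sum>b\<in>Y. \<Sum>c\<in>X. \<Sum>d\<in>Y. h a b c d) = (\<Sum>c\<in>X. \<Sum>d\<in>Y. \<Sum>a\<in>X. \<Sum>b\<in>Y. h a b c d)"
proof -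
  have "(\<Sum>a\<in>X. \<Sum>b\<in>Y. \<Sum>c\<in>X. \<Sum>d\<in>Y. h a b c d) = (\<Sum>a\<in>X. \<Sum>c\<in>X. \<Sum>b\<in>Y. \<Sum>d\<in>Y. h a b c d)"
    by (rule sum.cong[OF refl], rule sum.swap)
  also have "\<dots> = (\<Sum>c\<in>X. \<Sum>a\<in>X. \<Sum>b\<in>Y. \<Sum>d\<in>Y. h a b c d)" by (rule sum.swap)
  also have "\<dots> = (\<Sum>c\<in>X. \<Sum>a\<in>X. \<Sum>d\<in>Y. \<Sum>b\<in>Y. h a b c d)"
    by (rule sum.cong[OF refl], rule sum.cong[OF refl], rule sum.swap)
  also have "\<dots> = (\<Sum>c\<in>X. \<Sum>d\<in>Y. \<Sum>a\<in>X. \<Sum>b\<in>Y. h a b c d)"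
    by (rule sum.cong[OF refl], rule sum.swap)
  finally show ?thesis .
qed

lemma Gf_adj:
  assumes K: "\<And>A B C D. K (bar A) (bar B) C D = K (bar C) (bar D) A B"
  shows "Gf n z (Mgen n K w) = Gf n (Mgen n K z) w"
proof -
  have "Gf n z (Mgen n K w) = (\<Sum>A\<in>Iset n. \<Sum>B\<in>Iset n. \<Sum>C\<in>Iset n. \<Sum>D\<in>Iset n.
      z A B * K (bar A) (bar B) C D * w C D)"
    unfolding Gf_def Mgen_def by (simp add: sum_distrib_left mult.assoc)
  also have "\<dots> = (\<Sum>C\<in>Iset n. \<Sum>D\<in>Iset n. \<Sum>A\<in>Iset n. \<Sum>B\<in>Iset n.
      z A B * K (bar A) (bar B) C D * w C D)" by (rule swap4)
  also have "\<dots> = (\<Sum>C\<in>Iset n. \<Sum>D\<in>Iset n. \<Sum>A\<in>Iset n. \<Sum>B\<in>Iset n.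
      K (bar C) (bar D) A B * z A B * w C D)" by (simp add: K mult.commute)
  also have "\<dots> = (\<Sum>C\<in>Iset n. \<Sum>D\<in>Iset n. (\<Sum>A\<in>Iset n. \<Sum>B\<in>Iset n.
      K (bar C) (bar D) A B * z A B) * w C D)" by (simp add: sum_distrib_right)
  also have "\<dots> = (\<Sum>C\<in>Iset n. \<Sum>D\<in>Iset n. Mgen n K z (bar C) (bar D) * w C D)"
    by (simp add: Mgen_def)
  also have "\<dots> = (\<Sum>C\<in>Iset n. \<Sum>D\<in>Iset n. Mgen n K z C D * w (bar C) (bar D))"
    by (subst sum_bar[symmetric], rule sum.cong[OF refl], subst sum_bar[symmetric], simp)
  finally show ?thesis by (simp add: Gf_def)
qed

lemma lev_bar[simp]: "lev (bar A) (bar B) = - lev A B" by (simp add: lev_def)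

lemma Gf_Proj: "Gf n z (Proj k w) = Gf n (Proj (-k) z) w"
  unfolding Gf_def Proj_def by (intro sum.cong refl) auto

locale frameT =
  fixes n :: nat and Tf :: "fidx \<Rightarrow> fidx \<Rightarrow> fidx \<Rightarrow> fidx \<Rightarrow> real"
  assumes asym: "\<And>A B C D. Tf A B C D = - Tf B A C D"
    and psym: "\<And>A B C D. Tf A B C D = Tf C D A B"
    and posv: "\<And>A B C D. A \<in> Iset n \<Longrightarrow> B \<in> Iset n \<Longrightarrow> C \<in> Iset n \<Longrightarrow> D \<in> Iset n \<Longrightarrow>
        bw A + bw B + bw C + bw D > 0 \<Longrightarrow> Tf A B C D = 0"
    and nilS: "\<exists>k. \<forall>z. (\<forall>A B. z A B = z B A) \<and> supp n z \<longrightarrow>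
        (Mgen n (\<lambda>A B C D. Tf (bar A) C (bar B) D) ^^ k) z = (\<lambda>A B. 0)"
    and nilB: "\<exists>k. \<forall>z. (\<forall>A B. z A B = - z B A) \<and> supp n z \<longrightarrow>
        (Mgen n (\<lambda>A B C D. (1/2) * Tf (bar A) (bar B) C D) ^^ k) z = (\<lambda>A B. 0)"
begin

abbreviation "Ks \<equiv> (\<lambda>A B C D. Tf (bar A) C (bar B) D)"
abbreviation "Kb \<equiv> (\<lambda>A B C D. (1/2) * Tf (bar A) (bar B) C D)"

lemma asym2: "Tf A B C D = - Tf A B D C" by (simp only: psym[of A B C D] asym[of C D A B] psym[of D C A B])
lemma diag1[simp]: "Tf A A C D = 0" using asym[of A A C D] by simp
lemma diag2[simp]: "Tf A B C C = 0" using asym2[of A B C C] by simp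

lemma tri_Ks: "tri n Ks"
  unfolding tri_def lev_def by (auto intro!: posv)
lemma tri_Kb: "tri n Kb"
  unfolding tri_def lev_def by (auto intro!: posv)

lemma Ks_adj: "Ks (bar A) (bar B) C D = Ks (bar C) (bar D) A B" by (simp only: bar_bar asym[of A C B D] asym2[of C A B D] minus_minus)
lemma Kb_adj: "Kb (bar A) (bar B) C D = Kb (bar C) (bar D) A B" by (simp add: psym)


lemma Ms_sym: assumes "\<forall>A B. z A B = z B A" shows "Mgen n Ks z B A = Mgen n Ks z A B"
proof -
  have "(\<Sum>C\<in>Iset n. \<Sum>D\<in>Iset n. Tf (bar B) C (bar A) D * z C D)
      = (\<Sum>D\<in>Iset n. \<Sum>C\<in>Iset n. Tf (bar B) C (bar A) D * z C D)" by (rule sum.swap)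
  also have "\<dots> = (\<Sum>D\<in>Iset n. \<Sum>C\<in>Iset n. Tf (bar A) D (bar B) C * z D C)"
    by (intro sum.cong refl) (subst psym, simp add: assms)
  finally show ?thesis unfolding Mgen_def by auto
qed

lemma Mb_asym: "Mgen n Kb z B A = - Mgen n Kb z A B"
proof -
  have "(\<Sum>C\<in>Iset n. \<Sum>D\<in>Iset n. Kb B A C D * z C D) = - (\<Sum>C\<in>Iset n. \<Sum>D\<in>Iset n. Kb A B C D * z C D)"
    by (simp add: sum_negf[symmetric]) (intro sum.cong refl, subst asym, simp)
  thus ?thesis unfolding Mgen_def by auto
qed

definition "S0 = {z. (\<forall>A B. z A B = z B A) \<and> supp n z \<and> Proj 0 z = z}"

lemma S0_lev: assumes "z \<in> S0" "lev A B \<noteq> 0" shows "z A B = 0"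
proof -
  have "Proj 0 z A B = z A B" using assms(1) by (simp add: S0_def)
  thus ?thesis using assms(2) by (simp add: Proj_def)
qed

lemma S0_vals: assumes "z \<in> S0"
  shows "z FL FL = 0" "z FN FN = 0" "\<And>j. z FL (FM j) = 0" "\<And>j. z (FM j) FL = 0"
    "\<And>j. z FN (FM j) = 0" "\<And>j. z (FM j) FN = 0" "z FN FL = z FL FN"
    "\<And>i j. \<not> i < n \<Longrightarrow> z (FM i) (FM j) = 0"
    "\<And>i j. \<not> j < n \<Longrightarrow> z (FM i) (FM j) = 0"
  using S0_lev[OF assms] assms unfolding S0_def supp_def by (simp_all add: lev_def)

lemma S0_pos: assumes "z \<in> S0" "Gf n z z = 0" shows "z = (\<lambda>A B. 0)"
proof -
  have "Gf n z z = 2*(z FL FN)^2 + (\<Sum>i<n. \<Sum>j<n. (z (FM i) (FM j))^2)"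
    by (simp add: Gf_def sum_Iset S0_vals[OF assms(1)] power2_eq_square)
  moreover have "(\<Sum>i<n. \<Sum>j<n. (z (FM i) (FM j))^2) \<ge> 0" by (intro sum_nonneg) auto
  ultimately have a: "z FL FN = 0" and b: "(\<Sum>i<n. \<Sum>j<n. (z (FM i) (FM j))^2) = 0"
    using assms(2) by (smt (verit) zero_le_power2 power2_eq_square mult_eq_0_iff)+
  have c: "z (FM i) (FM j) = 0" if "i < n" "j < n" for i j
  proof -
    have "(\<Sum>j<n. (z (FM i) (FM j))^2) = 0"
      using b that by (subst (asm) sum_nonneg_eq_0_iff) (auto intro!: sum_nonneg)
    thus ?thesis using that by (subst (asm) sum_nonneg_eq_0_iff) auto
  qed
  have c': "z (FM i) (FM j) = 0" for i j
    using c S0_vals(8,9)[OF assms(1)] by (metis)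
  show ?thesis
  proof (intro ext)
    fix A B show "z A B = 0"
      by (cases A; cases B) (use a c' S0_vals[OF assms(1)] in auto)
  qed
qed

lemma Proj_Proj[simp]: "Proj k (Proj k z) = Proj k z" by (simp add: Proj_def fun_eq_iff)

lemma S0_inv: "z \<in> S0 \<Longrightarrow> Proj 0 (Mgen n Ks z) \<in> S0"
  unfolding S0_def supp_def
  by (auto simp: Proj_def lev_def Ms_sym add.commute fun_eq_iff) (auto simp: Mgen_def)

lemma S0_adj: assumes "x \<in> S0" "y \<in> S0"
  shows "Gf n x (Proj 0 (Mgen n Ks y)) = Gf n (Proj 0 (Mgen n Ks x)) y"
proof -
  have px: "Proj 0 x = x" and py: "Proj 0 y = y" using assms by (auto simp: S0_def)
  have "Gf n x (Proj 0 (Mgen n Ks y)) = Gf n (Proj 0 x) (Mgen n Ks y)" using Gf_Proj[of n x 0] by simp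
  also have "\<dots> = Gf n (Mgen n Ks x) y" unfolding px by (rule Gf_adj) (rule Ks_adj)
  also have "\<dots> = Gf n (Mgen n Ks x) (Proj 0 y)" using py by simp
  also have "\<dots> = Gf n (Proj 0 (Mgen n Ks x)) y" using Gf_Proj[of n _ 0] by simp
  finally show ?thesis .
qed

lemma S0_zero: "z \<in> S0 \<Longrightarrow> Proj 0 (Mgen n Ks z) = (\<lambda>A B. 0)"
proof -
  obtain k where k: "\<forall>z. (\<forall>A B. z A B = z B A) \<and> supp n z \<longrightarrow> (Mgen n Ks ^^ k) z = (\<lambda>A B. 0)"
    using nilS by blast
  have nil: "\<forall>x\<in>S0. ((Proj 0 \<circ> Mgen n Ks) ^^ k) x = (\<lambda>A B. 0)"
    using level_nil[OF tri_Ks k] by (auto simp: S0_def)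
  have "\<forall>x\<in>S0. (Proj 0 \<circ> Mgen n Ks) x = (\<lambda>A B. 0)"
  proof (rule sa_nil[where Bf="Gf n", OF _ _ _ _ nil])
    show "\<forall>x\<in>S0. (Proj 0 \<circ> Mgen n Ks) x \<in> S0" using S0_inv by simp
    show "\<forall>x\<in>S0. \<forall>y\<in>S0. Gf n x ((Proj 0 \<circ> Mgen n Ks) y) = Gf n ((Proj 0 \<circ> Mgen n Ks) x) y"
      using S0_adj by simp
    show "\<forall>x\<in>S0. Gf n x (\<lambda>A B. 0) = 0" by (simp add: Gf_def)
    show "\<forall>x\<in>S0. Gf n x x = 0 \<longrightarrow> x = (\<lambda>A B. 0)" using S0_pos by blast
  qed
  thus "z \<in> S0 \<Longrightarrow> Proj 0 (Mgen n Ks z) = (\<lambda>A B. 0)" by simp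
qed

definition "eLN = (\<lambda>A B. if (A = FL \<and> B = FN) \<or> (A = FN \<and> B = FL) then 1 else (0::real))"

lemma eLN_S0: "eLN \<in> S0"
  unfolding S0_def supp_def eLN_def Proj_def by (auto simp: lev_def fun_eq_iff)

lemma t0_zero: "Tf FL FN FL FN = 0"
proof -
  have "Proj 0 (Mgen n Ks eLN) FL FN = 0" using S0_zero[OF eLN_S0] by simp
  hence "Tf FN FL FL FN = 0"
    by (simp add: Proj_def lev_def Mgen_def sum_Iset eLN_def)
  thus ?thesis using asym by (metis neg_equal_0_iff_equal)
qed

lemma A_sym0: assumes "i < n" "j < n"
  shows "Tf (FM i) FL (FM j) FN + Tf (FM i) FN (FM j) FL = 0"
proof -
  have "Proj 0 (Mgen n Ks eLN) (FM i) (FM j) = 0" using S0_zero[OF eLN_S0] by simp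
  thus ?thesis using assms
    by (simp add: Proj_def lev_def Mgen_def sum_Iset eLN_def)
qed

end

definition Op :: "nat \<Rightarrow> (nat \<Rightarrow> nat \<Rightarrow> real) \<Rightarrow> (nat \<Rightarrow> real) \<Rightarrow> (nat \<Rightarrow> real)" where
  "Op n M x = (\<lambda>i. if i < n then (\<Sum>j<n. M i j * x j) else 0)"

lemma Op_anti:
  assumes anti: "\<And>i j. i < n \<Longrightarrow> j < n \<Longrightarrow> M i j = - M j i"
  shows "(\<Sum>i<n. x i * Op n M y i) = - (\<Sum>i<n. Op n M x i * y i)"
proof -
  have "(\<Sum>i<n. x i * Op n M y i) = (\<Sum>i<n. \<Sum>j<n. M i j * x i * y j)"
    by (simp add: Op_def sum_distrib_left mult_ac)
  also have "\<dots> = (\<Sum>j<n. \<Sum>i<n. M i j * x i * y j)" by (rule sum.swap)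
  also have "\<dots> = (\<Sum>j<n. \<Sum>i<n. - (M j i * x i * y j))"
    by (intro sum.cong refl) (subst anti, auto)
  also have "\<dots> = - (\<Sum>i<n. Op n M x i * y i)"
    by (simp add: Op_def sum_distrib_right sum_distrib_left sum_negf mult_ac)
  finally show ?thesis .
qed

lemma antisym_nil:
  assumes anti: "\<And>i j. i < n \<Longrightarrow> j < n \<Longrightarrow> M i j = - M j i"
    and nil: "\<forall>x. \<forall>i<n. (Op n M ^^ k) x i = 0"
    and ij: "i < n" "j < n"
  shows "M i j = 0"
proof -
  define S where "S = {x::nat\<Rightarrow>real. \<forall>i. \<not> i < n \<longrightarrow> x i = 0}"
  define Bf where "Bf = (\<lambda>x y::nat\<Rightarrow>real. \<Sum>i<n. x i * y i)"
  have OpS: "\<forall>x\<in>S. Op n M x \<in> S" by (auto simp: S_def Op_def)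
  have pos: "\<forall>x\<in>S. Bf x x = 0 \<longrightarrow> x = (\<lambda>i. 0)"
  proof (intro ballI impI ext)
    fix x i assume x: "x \<in> S" and b: "Bf x x = 0"
    show "x i = 0"
    proof (cases "i < n")
      case True
      have "(\<Sum>i<n. x i * x i) = 0" using b by (simp add: Bf_def)
      hence "\<forall>i\<in>{..<n}. x i * x i = 0" by (subst (asm) sum_nonneg_eq_0_iff) auto
      thus ?thesis using True by simp
    next
      case False thus ?thesis using x by (simp add: S_def)
    qed
  qed
  have nilS: "\<forall>x\<in>S. (Op n M ^^ k) x = (\<lambda>i. 0)"
  proof (intro ballI ext)
    fix x i assume x: "x \<in> S"
    have "(Op n M ^^ k) x \<in> S" using funpow_in[OF OpS x] .
    thus "(Op n M ^^ k) x i = 0" using nil by (cases "i < n") (auto simp: S_def)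
  qed
  have nil2: "\<forall>x\<in>S. ((Op n M \<circ> Op n M) ^^ k) x = (\<lambda>i. 0)"
  proof
    fix x assume x: "x \<in> S"
    have "(Op n M \<circ> Op n M) = Op n M ^^ 2" by (simp add: numeral_2_eq_2)
    hence "((Op n M \<circ> Op n M) ^^ k) = Op n M ^^ (k + k)" by (simp add: funpow_mult mult_2)
    hence "((Op n M \<circ> Op n M) ^^ k) x = (Op n M ^^ k) ((Op n M ^^ k) x)" by (simp add: funpow_add)
    also have "\<dots> = (\<lambda>i. 0)" using nilS funpow_in[OF OpS x] by simp
    finally show "((Op n M \<circ> Op n M) ^^ k) x = (\<lambda>i. 0)" .
  qed
  have zz: "\<forall>x\<in>S. (Op n M \<circ> Op n M) x = (\<lambda>i. 0)"
  proof (rule sa_nil[where Bf=Bf, OF _ _ _ _ nil2])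
    show "\<forall>x\<in>S. (Op n M \<circ> Op n M) x \<in> S" using OpS by simp
    show "\<forall>x\<in>S. \<forall>y\<in>S. Bf x ((Op n M \<circ> Op n M) y) = Bf ((Op n M \<circ> Op n M) x) y"
      unfolding Bf_def using Op_anti[OF anti] by simp
    show "\<forall>x\<in>S. Bf x (\<lambda>i. 0) = 0" by (simp add: Bf_def)
    show "\<forall>x\<in>S. Bf x x = 0 \<longrightarrow> x = (\<lambda>i. 0)" by (rule pos)
  qed
  define e where "e = (\<lambda>l. if l = j then 1 else (0::real))"
  have eS: "e \<in> S" using ij by (simp add: S_def e_def)
  have "Bf (Op n M e) (Op n M e) = - Bf e (Op n M (Op n M e))"
    unfolding Bf_def using Op_anti[OF anti, where x=e and y="Op n M e"] by simp
  also have "\<dots> = 0" using zz eS by (simp add: Bf_def)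
  finally have "Op n M e = (\<lambda>i. 0)" using pos OpS eS by blast
  hence "Op n M e i = 0" by simp
  hence "(\<Sum>l<n. M i l * e l) = 0" using ij by (simp add: Op_def)
  moreover have "(\<Sum>l<n. M i l * e l) = (\<Sum>l<n. if l = j then M i l else 0)"
    by (intro sum.cong) (auto simp: e_def)
  ultimately show ?thesis using ij by simp
qed

definition emb1 :: "nat \<Rightarrow> real \<Rightarrow> (nat \<Rightarrow> real) \<Rightarrow> arr" where
  "emb1 n s x = (\<lambda>A B. case A of
      FL \<Rightarrow> (case B of FM j \<Rightarrow> if j < n then x j else 0 | _ \<Rightarrow> 0)
    | FM i \<Rightarrow> (case B of FL \<Rightarrow> if i < n then s * x i else 0 | _ \<Rightarrow> 0)
    | FN \<Rightarrow> 0)"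

lemma emb1_simps[simp]:
  "emb1 n s x FL (FM j) = (if j < n then x j else 0)"
  "emb1 n s x (FM i) FL = (if i < n then s * x i else 0)"
  "emb1 n s x FL FL = 0" "emb1 n s x FL FN = 0" "emb1 n s x FN B = 0"
  "emb1 n s x (FM i) FN = 0" "emb1 n s x (FM i) (FM j) = 0"
  by (simp_all add: emb1_def)

lemma emb1_Proj: "Proj 1 (emb1 n s x) = emb1 n s x"
proof (intro ext)
  fix A B show "Proj 1 (emb1 n s x) A B = emb1 n s x A B"
    by (cases A; cases B) (simp_all add: Proj_def lev_def)
qed

lemma emb1_supp: "supp n (emb1 n s x)"
  unfolding supp_def
proof (intro allI impI)
  fix A B assume "A \<notin> Iset n \<or> B \<notin> Iset n"
  thus "emb1 n s x A B = 0" by (cases A; cases B) auto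
qed

lemma emb1_sym: "emb1 n 1 x A B = emb1 n 1 x B A"
  by (cases A; cases B) auto

lemma emb1_asym: "emb1 n (-1) x A B = - emb1 n (-1) x B A"
  by (cases A; cases B) auto

lemma iter_emb:
  assumes "\<And>x. F (emb x) = emb (G x)"
  shows "(F ^^ k) (emb x) = emb ((G ^^ k) x)"
  by (induction k) (auto simp: assms)

context frameT
begin

lemma Mgen_out: "\<not> (A \<in> Iset n \<and> B \<in> Iset n) \<Longrightarrow> Mgen n K z A B = 0"
  unfolding Mgen_def by auto

lemma flipL: "Tf A B (FM k) FL = - Tf A B FL (FM k)" using asym2 by blast

lemma Mb_entry: assumes "i < n"
  shows "Mgen n Kb (emb1 n (-1) x) FL (FM i) = Op n (\<lambda>i j. Tf FN (FM i) FL (FM j)) x i"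
  using assms by (simp add: Mgen_def sum_Iset flipL Op_def sum_divide_distrib[symmetric] sum_negf)

lemma Mb_emb1: "Proj 1 (Mgen n Kb (emb1 n (-1) x)) = emb1 n (-1) (Op n (\<lambda>i j. Tf FN (FM i) FL (FM j)) x)"
proof (intro ext)
  fix A B
  show "Proj 1 (Mgen n Kb (emb1 n (-1) x)) A B = emb1 n (-1) (Op n (\<lambda>i j. Tf FN (FM i) FL (FM j)) x) A B"
  proof (cases A)
    case FL thus ?thesis
      using Mb_entry by (cases B) (auto simp: Proj_def lev_def Mgen_out Op_def)
  next
    case FN thus ?thesis
      by (cases B) (auto simp: Proj_def lev_def)
  next
    case (FM i) thus ?thesis
      using Mb_entry Mb_asym[of _ "FM i" FL]
      by (cases B) (auto simp: Proj_def lev_def Mgen_out Op_def)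
  qed
qed

lemma Ms_entry: assumes "i < n"
  shows "Mgen n Ks (emb1 n 1 x) FL (FM i) =
     Op n (\<lambda>i j. Tf FN FL (FM i) (FM j) + Tf FN (FM j) (FM i) FL) x i"
  using assms by (simp add: Mgen_def sum_Iset Op_def sum.distrib algebra_simps)

lemma Ms_emb1: "Proj 1 (Mgen n Ks (emb1 n 1 x)) =
    emb1 n 1 (Op n (\<lambda>i j. Tf FN FL (FM i) (FM j) + Tf FN (FM j) (FM i) FL) x)"
proof (intro ext)
  fix A B
  show "Proj 1 (Mgen n Ks (emb1 n 1 x)) A B =
    emb1 n 1 (Op n (\<lambda>i j. Tf FN FL (FM i) (FM j) + Tf FN (FM j) (FM i) FL) x) A B"
  proof (cases A)
    case FL thus ?thesis
      by (cases B) (auto simp: Proj_def lev_def Ms_entry Mgen_out Op_def)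
  next
    case FN thus ?thesis
      by (cases B) (auto simp: Proj_def lev_def)
  next
    case (FM i) thus ?thesis
      using Ms_sym[of "emb1 n 1 x" "FM i" FL] emb1_sym
      by (cases B) (auto simp: Proj_def lev_def Ms_entry Mgen_out Op_def)
  qed
qed

lemma A_zero: assumes "i < n" "j < n" shows "Tf FL (FM i) FN (FM j) = 0"
proof -
  define Mbm where "Mbm = (\<lambda>i j. Tf FN (FM i) FL (FM j))"
  obtain K where K: "\<forall>z. (\<forall>A B. z A B = - z B A) \<and> supp n z \<longrightarrow> (Mgen n Kb ^^ K) z = (\<lambda>A B. 0)"
    using nilB by blast
  have nil: "\<forall>x. \<forall>i<n. (Op n Mbm ^^ K) x i = 0"
  proof (intro allI impI)
    fix x i assume i: "i < n"
    have "((Proj 1 \<circ> Mgen n Kb) ^^ K) (emb1 n (-1) x) = (\<lambda>A B. 0)"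
      using emb1_asym emb1_supp emb1_Proj by (intro level_nil[OF tri_Kb K]) blast+
    moreover have "((Proj 1 \<circ> Mgen n Kb) ^^ K) (emb1 n (-1) x) = emb1 n (-1) ((Op n Mbm ^^ K) x)"
      by (rule iter_emb[where emb="emb1 n (-1)" and F="Proj 1 \<circ> Mgen n Kb"]) (simp only: comp_apply Mb_emb1 Mbm_def)
    ultimately have "emb1 n (-1) ((Op n Mbm ^^ K) x) = (\<lambda>A B. 0)" by metis
    hence "emb1 n (-1) ((Op n Mbm ^^ K) x) FL (FM i) = 0" by simp
    thus "(Op n Mbm ^^ K) x i = 0" using i by simp
  qed
  have e1: "Tf FN (FM i) FL (FM j) = Tf (FM j) FL (FM i) FN" for i j
    by (simp only: psym[of FN "FM i" FL "FM j"] asym[of FL "FM j" FN "FM i"]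
        asym2[of "FM j" FL FN "FM i"] minus_minus)
  have anti: "Mbm i j = - Mbm j i" if "i < n" "j < n" for i j
  proof -
    have "Mbm i j + Mbm j i = 0"
      using A_sym0[OF that(2) that(1)] e1[of i j] e1[of j i] psym[of "FM j" FN "FM i" FL]
      by (simp add: Mbm_def)
    thus ?thesis by simp
  qed
  have "Mbm j i = 0" using antisym_nil[OF anti nil] assms by blast
  thus ?thesis by (simp add: Mbm_def psym[of FN "FM j" FL "FM i"])
qed

lemma C_zero: assumes "i < n" "j < n" shows "Tf FL FN (FM i) (FM j) = 0"
proof -
  define Msm where "Msm = (\<lambda>i j. Tf FN FL (FM i) (FM j) + Tf FN (FM j) (FM i) FL)"
  obtain K where K: "\<forall>z. (\<forall>A B. z A B = z B A) \<and> supp n z \<longrightarrow> (Mgen n Ks ^^ K) z = (\<lambda>A B. 0)"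
    using nilS by blast
  have nil: "\<forall>x. \<forall>i<n. (Op n Msm ^^ K) x i = 0"
  proof (intro allI impI)
    fix x i assume i: "i < n"
    have "((Proj 1 \<circ> Mgen n Ks) ^^ K) (emb1 n 1 x) = (\<lambda>A B. 0)"
      using emb1_sym emb1_supp emb1_Proj by (intro level_nil[OF tri_Ks K]) blast+
    moreover have "((Proj 1 \<circ> Mgen n Ks) ^^ K) (emb1 n 1 x) = emb1 n 1 ((Op n Msm ^^ K) x)"
      by (rule iter_emb[where emb="emb1 n 1" and F="Proj 1 \<circ> Mgen n Ks"]) (simp add: Ms_emb1 Msm_def)
    ultimately have "emb1 n 1 ((Op n Msm ^^ K) x) = (\<lambda>A B. 0)" by metis
    hence "emb1 n 1 ((Op n Msm ^^ K) x) FL (FM i) = 0" by simp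
    thus "(Op n Msm ^^ K) x i = 0" using i by simp
  qed
  have m: "Msm i j = Tf FN FL (FM i) (FM j)" if "i < n" "j < n" for i j
  proof -
    have "Tf FN (FM j) (FM i) FL = - Tf FL (FM i) FN (FM j)"
      by (simp only: psym[of FN "FM j" "FM i" FL] asym[of "FM i" FL FN "FM j"])
    thus ?thesis using A_zero[OF that] by (simp add: Msm_def)
  qed
  have anti: "Msm i j = - Msm j i" if "i < n" "j < n" for i j
    by (simp only: m[OF that] m[OF that(2,1)] asym2[of FN FL "FM i" "FM j"])
  have "Msm i j = 0" using antisym_nil[OF anti nil] assms by blast
  hence "Tf FN FL (FM i) (FM j) = 0" using m assms by simp
  thus ?thesis using asym by (metis neg_equal_0_iff_equal)
qed

end

context frameT begin
definition "SB0 = {z. (\<forall>A B. z A B = - z B A) \<and> supp n z \<and> Proj 0 z = z \<and> z FL FN = 0}"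

lemma SB0_D: assumes "z \<in> SB0"
  shows "\<And>A B. z A B = - z B A" "supp n z" "Proj 0 z = z" "z FL FN = 0"
  using assms unfolding SB0_def mem_Collect_eq by blast+

lemma SB0_lev: assumes "z \<in> SB0" "lev A B \<noteq> 0" shows "z A B = 0"
proof -
  have "Proj 0 z A B = z A B" using SB0_D(3)[OF assms(1)] by simp
  thus ?thesis using assms(2) by (simp add: Proj_def)
qed

lemma SB0_vals: assumes "z \<in> SB0"
  shows "z FL FL = 0" "z FN FN = 0" "\<And>j. z FL (FM j) = 0" "\<And>j. z (FM j) FL = 0"
    "\<And>j. z FN (FM j) = 0" "\<And>j. z (FM j) FN = 0" "z FN FL = 0" "z FL FN = 0"
    "\<And>i j. \<not> i < n \<Longrightarrow> z (FM i) (FM j) = 0"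
    "\<And>i j. \<not> j < n \<Longrightarrow> z (FM i) (FM j) = 0"
proof -
  show "z FN FL = 0" using SB0_D(1)[OF assms, of FN FL] SB0_D(4)[OF assms] by simp
  show "z FL FN = 0" by (rule SB0_D(4)[OF assms])
next
  have s: "supp n z" using SB0_D(2)[OF assms] .
  note l = SB0_lev[OF assms]
  show "z FL FL = 0" "z FN FN = 0" "\<And>j. z FL (FM j) = 0" "\<And>j. z (FM j) FL = 0"
    "\<And>j. z FN (FM j) = 0" "\<And>j. z (FM j) FN = 0"
    by (simp_all add: l lev_def)
  show "\<And>i j. \<not> i < n \<Longrightarrow> z (FM i) (FM j) = 0" "\<And>i j. \<not> j < n \<Longrightarrow> z (FM i) (FM j) = 0"
    using s by (simp_all add: supp_def)
qed

lemma SB0_pos: assumes "z \<in> SB0" "Gf n z z = 0" shows "z = (\<lambda>A B. 0)"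
proof -
  have "Gf n z z = (\<Sum>i<n. \<Sum>j<n. (z (FM i) (FM j))^2)"
    by (simp add: Gf_def sum_Iset SB0_vals[OF assms(1)] power2_eq_square)
  hence b: "(\<Sum>i<n. \<Sum>j<n. (z (FM i) (FM j))^2) = 0" using assms(2) by simp
  have c: "z (FM i) (FM j) = 0" if "i < n" "j < n" for i j
  proof -
    have "(\<Sum>j<n. (z (FM i) (FM j))^2) = 0"
      using b that by (subst (asm) sum_nonneg_eq_0_iff) (auto intro!: sum_nonneg)
    thus ?thesis using that by (subst (asm) sum_nonneg_eq_0_iff) auto
  qed
  have c': "z (FM i) (FM j) = 0" for i j
    using c SB0_vals(9,10)[OF assms(1)] by (metis)
  show ?thesis
  proof (intro ext)
    fix A B show "z A B = 0"
      by (cases A; cases B) (use c' SB0_vals[OF assms(1)] in auto)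
  qed
qed

lemma SB0_inv: assumes "z \<in> SB0" shows "Proj 0 (Mgen n Kb z) \<in> SB0"
proof -
  have "Mgen n Kb z FL FN = (\<Sum>i<n. \<Sum>j<n. Tf FN FL (FM i) (FM j) * z (FM i) (FM j) / 2)"
    by (simp add: Mgen_def sum_Iset SB0_vals[OF assms])
  also have "\<dots> = 0"
  proof -
    have "Tf FN FL (FM i) (FM j) = 0" if "i < n" "j < n" for i j
      using C_zero[OF that] asym[of FN FL "FM i" "FM j"] by simp
    thus ?thesis by simp
  qed
  finally have z0: "Mgen n Kb z FL FN = 0" .
  have as: "\<forall>A B. Proj 0 (Mgen n Kb z) A B = - Proj 0 (Mgen n Kb z) B A"
  proof (intro allI)
    fix A B
    have "lev B A = lev A B" by (simp add: lev_def)
    thus "Proj 0 (Mgen n Kb z) A B = - Proj 0 (Mgen n Kb z) B A"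
      using Mb_asym[of z A B] by (simp add: Proj_def)
  qed
  have sp: "supp n (Proj 0 (Mgen n Kb z))" unfolding supp_def by (auto simp: Proj_def Mgen_out)
  show ?thesis unfolding SB0_def mem_Collect_eq
    by (intro conjI) (rule as, rule sp, simp, use z0 in \<open>simp add: Proj_def lev_def\<close>)
qed

lemma SB0_adj: assumes "x \<in> SB0" "y \<in> SB0"
  shows "Gf n x (Proj 0 (Mgen n Kb y)) = Gf n (Proj 0 (Mgen n Kb x)) y"
proof -
  have px: "Proj 0 x = x" and py: "Proj 0 y = y" using SB0_D(3) assms by auto
  have "Gf n x (Proj 0 (Mgen n Kb y)) = Gf n (Proj 0 x) (Mgen n Kb y)" using Gf_Proj[of n x 0] by simp
  also have "\<dots> = Gf n (Mgen n Kb x) y" unfolding px by (rule Gf_adj) (rule Kb_adj)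
  also have "\<dots> = Gf n (Mgen n Kb x) (Proj 0 y)" using py by simp
  also have "\<dots> = Gf n (Proj 0 (Mgen n Kb x)) y" using Gf_Proj[of n _ 0] by simp
  finally show ?thesis .
qed

lemma SB0_zero: "z \<in> SB0 \<Longrightarrow> Proj 0 (Mgen n Kb z) = (\<lambda>A B. 0)"
proof -
  obtain k where k: "\<forall>z. (\<forall>A B. z A B = - z B A) \<and> supp n z \<longrightarrow> (Mgen n Kb ^^ k) z = (\<lambda>A B. 0)"
    using nilB by blast
  have nil: "\<forall>x\<in>SB0. ((Proj 0 \<circ> Mgen n Kb) ^^ k) x = (\<lambda>A B. 0)"
  proof
    fix x assume "x \<in> SB0"
    thus "((Proj 0 \<circ> Mgen n Kb) ^^ k) x = (\<lambda>A B. 0)"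
      using SB0_D by (intro level_nil[OF tri_Kb k]) blast+
  qed
  have "\<forall>x\<in>SB0. (Proj 0 \<circ> Mgen n Kb) x = (\<lambda>A B. 0)"
  proof (rule sa_nil[where Bf="Gf n", OF _ _ _ _ nil])
    show "\<forall>x\<in>SB0. (Proj 0 \<circ> Mgen n Kb) x \<in> SB0" using SB0_inv by simp
    show "\<forall>x\<in>SB0. \<forall>y\<in>SB0. Gf n x ((Proj 0 \<circ> Mgen n Kb) y) = Gf n ((Proj 0 \<circ> Mgen n Kb) x) y"
      using SB0_adj by simp
    show "\<forall>x\<in>SB0. Gf n x (\<lambda>A B. 0) = 0" by (simp add: Gf_def)
    show "\<forall>x\<in>SB0. Gf n x x = 0 \<longrightarrow> x = (\<lambda>A B. 0)" using SB0_pos by blast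
  qed
  thus "z \<in> SB0 \<Longrightarrow> Proj 0 (Mgen n Kb z) = (\<lambda>A B. 0)" by simp
qed

definition dl :: "fidx \<Rightarrow> fidx \<Rightarrow> arr" where
  "dl P Q = (\<lambda>A B. if A = P \<and> B = Q then 1 else 0)"

lemma dl_swap: "dl P Q B A = dl Q P A B" by (simp add: dl_def conj_commute)
lemma dl_out: "A \<noteq> P \<or> B \<noteq> Q \<Longrightarrow> dl P Q A B = 0" by (auto simp: dl_def)

lemma sum_dl: assumes "P \<in> Iset n" "Q \<in> Iset n"
  shows "(\<Sum>C\<in>Iset n. \<Sum>D\<in>Iset n. h C D * dl P Q C D) = h P Q"
proof -
  have "(\<Sum>C\<in>Iset n. \<Sum>D\<in>Iset n. h C D * dl P Q C D) =
        (\<Sum>C\<in>Iset n. \<Sum>D\<in>Iset n. if D = Q then (if C = P then h C D else 0) else 0)"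
    by (intro sum.cong refl) (auto simp: dl_def)
  also have "\<dots> = (\<Sum>C\<in>Iset n. if C = P then h C Q else 0)"
    by (intro sum.cong refl) (simp add: assms)
  also have "\<dots> = h P Q" using assms by simp
  finally show ?thesis .
qed

lemma R_zero: assumes "i < n" "j < n" "k < n" "l < n"
  shows "Tf (FM i) (FM j) (FM k) (FM l) = 0"
proof (cases "k = l")
  case True thus ?thesis by simp
next
  case False
  define e where "e = (\<lambda>A B. dl (FM k) (FM l) A B - dl (FM l) (FM k) A B)"
  have eS: "e \<in> SB0"
    unfolding SB0_def mem_Collect_eq
  proof (intro conjI allI)
    fix A B show "e A B = - e B A" unfolding e_def by (simp add: dl_swap)
  next
    show "supp n e" unfolding supp_def
    proof (intro allI impI)
      fix A B assume "A \<notin> Iset n \<or> B \<notin> Iset n"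
      hence "A \<noteq> FM k \<or> B \<noteq> FM l" "A \<noteq> FM l \<or> B \<noteq> FM k" using assms by auto
      thus "e A B = 0" unfolding e_def by (simp add: dl_out)
    qed
  next
    show "Proj 0 e = e"
    proof (intro ext)
      fix A B show "Proj 0 e A B = e A B"
      proof (cases "lev A B = 0")
        case True thus ?thesis by (simp add: Proj_def)
      next
        case False
        hence "A \<noteq> FM k \<or> B \<noteq> FM l" "A \<noteq> FM l \<or> B \<noteq> FM k" by (auto simp: lev_def)
        thus ?thesis using False unfolding e_def Proj_def by (simp add: dl_out)
      qed
    qed
  next
    show "e FL FN = 0" by (simp add: e_def dl_def)
  qed
  have "Proj 0 (Mgen n Kb e) (FM i) (FM j) = 0" using SB0_zero[OF eS] by simp
  hence "Mgen n Kb e (FM i) (FM j) = 0" by (simp add: Proj_def lev_def)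
  moreover have "Mgen n Kb e (FM i) (FM j) = Kb (FM i) (FM j) (FM k) (FM l) - Kb (FM i) (FM j) (FM l) (FM k)"
    using assms unfolding Mgen_def e_def
    by (simp only: right_diff_distrib sum_subtractf sum_dl in_Iset if_True conj_absorb)
  ultimately have "Tf (FM i) (FM j) (FM k) (FM l) - Tf (FM i) (FM j) (FM l) (FM k) = 0" by simp
  thus ?thesis using asym2[of "FM i" "FM j" "FM k" "FM l"] by simp
qed

end

context frameT begin

lemma r1: "Tf FN FL C D = - Tf FL FN C D" by (rule asym)
lemma r2: "Tf A B FN FL = - Tf A B FL FN" by (rule asym2)
lemma r3: "Tf (FM i) FL C D = - Tf FL (FM i) C D" by (rule asym)
lemma r4: "Tf (FM i) FN C D = - Tf FN (FM i) C D" by (rule asym)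
lemma r5: "Tf A B (FM i) FL = - Tf A B FL (FM i)" by (rule asym2)
lemma r6: "Tf A B (FM i) FN = - Tf A B FN (FM i)" by (rule asym2)
lemma r7: "Tf FN (FM i) FL (FM j) = Tf FL (FM j) FN (FM i)" by (rule psym)
lemma r8: "Tf (FM i) (FM j) FL FN = Tf FL FN (FM i) (FM j)" by (rule psym)

lemma bw0_zero:
  assumes "A \<in> Iset n" "B \<in> Iset n" "C \<in> Iset n" "D \<in> Iset n" "bw A + bw B + bw C + bw D = 0"
  shows "Tf A B C D = 0"
  using assms
  by (cases A; cases B; cases C; cases D)
     (auto simp: r1 r2 r3 r4 r5 r6 r7 r8 t0_zero A_zero C_zero R_zero)

lemma final: "\<forall>A B C D. A \<in> Iset n \<and> B \<in> Iset n \<and> C \<in> Iset n \<and> D \<in> Iset n \<and>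
   bw A + bw B + bw C + bw D \<in> {0, 1, 2} \<longrightarrow> Tf A B C D = 0"
  using bw0_zero posv by fastforce

end

definition lw :: "('d::finite \<Rightarrow> 'd \<Rightarrow> real) \<Rightarrow> real^'d \<Rightarrow> real^'d" where
  "lw g v = (\<chi> c. \<Sum>a\<in>UNIV. g a c * v $ a)"

lemma gform_inner: "gform g u v = lw g u \<bullet> v"
proof -
  have "gform g u v = (\<Sum>a\<in>UNIV. \<Sum>b\<in>UNIV. g a b * u$a * v$b)" by (simp add: gform_def)
  also have "\<dots> = (\<Sum>b\<in>UNIV. \<Sum>a\<in>UNIV. g a b * u$a * v$b)" by (rule sum.swap)
  also have "\<dots> = lw g u \<bullet> v" by (simp add: inner_vec_def lw_def sum_distrib_right)
  finally show ?thesis .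
qed

lemma gform_sym: assumes "\<And>a b. g a b = g b a" shows "gform g u v = gform g v u"
proof -
  have "gform g u v = (\<Sum>a\<in>UNIV. \<Sum>b\<in>UNIV. g a b * u$a * v$b)" by (simp add: gform_def)
  also have "\<dots> = (\<Sum>b\<in>UNIV. \<Sum>a\<in>UNIV. g a b * u$a * v$b)" by (rule sum.swap)
  also have "\<dots> = gform g v u" unfolding gform_def by (simp add: assms mult_ac)
  finally show ?thesis .
qed

lemma gform_sum: "gform g u (\<Sum>A\<in>S. f A *\<^sub>R w A) = (\<Sum>A\<in>S. f A * gform g u (w A))"
  by (simp add: gform_inner inner_sum_right)

lemma gform_diff: "gform g u (x - y) = gform g u x - gform g u y"
  by (simp add: gform_inner inner_diff_right)

lemma card_Iset: "card (Iset n) = n + 2"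
proof -
  have "card (Iset n) = card {FL, FN} + card (FM ` {..<n})"
    unfolding Iset_eq by (rule card_Un_disjoint) auto
  also have "card (FM ` {..<n}) = n" by (subst card_image) (auto simp: inj_on_def)
  finally show ?thesis by simp
qed

locale brg =
  fixes g :: "'d::finite \<Rightarrow> 'd \<Rightarrow> real" and l nv :: "real^'d" and m :: "nat \<Rightarrow> real^'d"
    and nn :: nat
  assumes nn_def: "nn = CARD('d) - 2"
    and gsym: "\<And>a b. g a b = g b a"
    and nf: "null_frame g l nv m"
    and dim: "CARD('d) \<ge> 2"
begin

abbreviation "E \<equiv> fvec l nv m"

lemma eta: assumes "A \<in> Iset nn" "B \<in> Iset nn"
  shows "gform g (E A) (E B) = (if A = bar B then 1 else 0)"
proof -
  have s: "gform g u v = gform g v u" for u v using gform_sym[of g] gsym by blast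
  show ?thesis using assms nf[unfolded null_frame_def, folded nn_def] s[of l nv] s[of l "m i" for i] s[of nv "m i" for i]
    by (cases A; cases B) auto
qed

lemma eta_bar: assumes "A \<in> Iset nn" "B \<in> Iset nn"
  shows "gform g (E (bar A)) (E B) = (if A = B then 1 else 0)"
  using eta[of "bar A" B] assms by (auto, metis bar_bar)

lemma E_inj: "inj_on E (Iset nn)"
proof (rule inj_onI)
  fix A B assume A: "A \<in> Iset nn" and B: "B \<in> Iset nn" and e: "E A = E B"
  have "gform g (E (bar A)) (E A) = 1" using eta_bar[OF A A] by simp
  hence "gform g (E (bar A)) (E B) = 1" using e by simp
  thus "A = B" using eta_bar[OF A B] by (simp split: if_splits)
qed

lemma span_E: "span (E ` Iset nn) = UNIV"
proof -
  have ind: "independent (E ` Iset nn)"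
    unfolding independent_explicit_module
  proof (intro allI impI)
    fix t u v assume t: "finite t" "t \<subseteq> E ` Iset nn" and s: "(\<Sum>v\<in>t. u v *\<^sub>R v) = 0" and v: "v \<in> t"
    obtain A where A: "A \<in> Iset nn" "v = E A" using t v by blast
    have "0 = gform g (E (bar A)) (\<Sum>w\<in>t. u w *\<^sub>R w)" using s by (simp add: gform_inner)
    also have "\<dots> = (\<Sum>w\<in>t. u w * gform g (E (bar A)) w)" by (rule gform_sum)
    also have "\<dots> = (\<Sum>w\<in>t. if w = v then u w else 0)"
    proof (intro sum.cong refl)
      fix w assume "w \<in> t"
      then obtain B where B: "B \<in> Iset nn" "w = E B" using t by blast
      have "(w = v) = (B = A)" using E_inj A B inj_on_eq_iff by metis
      thus "u w * gform g (E (bar A)) w = (if w = v then u w else 0)"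
        using eta_bar[OF A(1) B(1)] B by auto
    qed
    also have "\<dots> = u v" using v t by simp
    finally show "u v = 0" by simp
  qed
  have "card (E ` Iset nn) = CARD('d)"
    using card_image[OF E_inj] card_Iset[of nn] dim nn_def by simp
  thus ?thesis using card_ge_dim_independent[OF _ ind, of UNIV] by auto
qed

lemma expand: "v = (\<Sum>A\<in>Iset nn. gform g (E (bar A)) v *\<^sub>R E A)"
proof -
  define w where "w = v - (\<Sum>A\<in>Iset nn. gform g (E (bar A)) v *\<^sub>R E A)"
  have orth: "gform g (E B) w = 0" if B: "B \<in> Iset nn" for B
  proof -
    have "gform g (E B) w = gform g (E B) v - (\<Sum>A\<in>Iset nn. gform g (E (bar A)) v * gform g (E B) (E A))"
      by (simp add: w_def gform_diff gform_sum)
    also have "(\<Sum>A\<in>Iset nn. gform g (E (bar A)) v * gform g (E B) (E A)) =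
        (\<Sum>A\<in>Iset nn. if A = bar B then gform g (E (bar A)) v else 0)"
      by (intro sum.cong refl) (simp add: eta B)
    also have "\<dots> = gform g (E B) v" using B by simp
    finally show ?thesis by simp
  qed
  have "w \<in> span (E ` Iset nn)" using span_E by simp
  then obtain c where c: "w = (\<Sum>x\<in>E ` Iset nn. c x *\<^sub>R x)"
    using span_finite[of "E ` Iset nn"] by auto
  hence c2: "w = (\<Sum>A\<in>Iset nn. c (E A) *\<^sub>R E A)"
    by (simp add: sum.reindex[OF E_inj])
  have cz: "c (E A) = 0" if A: "A \<in> Iset nn" for A
  proof -
    have "0 = gform g (E (bar A)) w" using orth[of "bar A"] A by simp
    also have "\<dots> = (\<Sum>B\<in>Iset nn. c (E B) * gform g (E (bar A)) (E B))" by (simp add: c2 gform_sum)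
    also have "\<dots> = (\<Sum>B\<in>Iset nn. if B = A then c (E B) else 0)"
      by (intro sum.cong refl) (simp add: eta_bar A)
    also have "\<dots> = c (E A)" using A by simp
    finally show ?thesis by simp
  qed
  have "w = 0" unfolding c2 using cz by simp
  thus ?thesis by (simp add: w_def)
qed

lemma sum_delta_mult: "(\<Sum>x\<in>(UNIV::'d set). f x * (if x = e then 1 else (0::real))) = f e"
proof -
  have "(\<Sum>x\<in>(UNIV::'d set). f x * (if x = e then 1 else (0::real))) = (\<Sum>x\<in>UNIV. if x = e then f x else 0)"
    by (intro sum.cong) auto
  thus ?thesis by simp
qed

lemma lw_eq: "lw g v = (\<chi> i j. g i j) *v v"
  by (simp add: lw_def matrix_vector_mult_def gsym vec_eq_iff mult_ac)

lemma G_inv: "invertible (\<chi> i j. g i j)"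
proof -
  have "inj ((*v) (\<chi> i j. g i j))"
    unfolding vec.inj_iff_eq_0
  proof (intro allI impI)
    fix v :: "real^'d" assume "(\<chi> i j. g i j) *v v = 0"
    hence lv: "lw g v = 0" by (simp add: lw_eq)
    have "gform g (E (bar A)) v = 0" for A
    proof -
      have "gform g (E (bar A)) v = gform g v (E (bar A))" by (rule gform_sym) (rule gsym)
      thus ?thesis by (simp add: gform_inner lv)
    qed
    thus "v = 0" using expand[of v] by simp
  qed
  thus ?thesis using matrix_left_invertible_injective invertible_left_inverse by blast
qed

lemma ginv_rel: "(\<Sum>b\<in>UNIV. g a b * ginv g b c) = (if a = c then 1 else 0)"
proof -
  let ?G = "(\<chi> i j. g i j) :: real^'d^'d"
  have "?G ** matrix_inv ?G = mat 1"
    using G_inv unfolding invertible_def matrix_inv_def by (rule someI2_ex) auto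
  hence "(?G ** matrix_inv ?G) $ a $ c = mat 1 $ a $ c" by simp
  thus ?thesis by (simp add: matrix_matrix_mult_def mat_def ginv_def)
qed

lemma lw_ginv: "(\<Sum>a\<in>UNIV. ginv g a e * lw g u $ a) = u $ e"
proof -
  have "(\<Sum>a\<in>UNIV. ginv g a e * lw g u $ a) = (\<Sum>a\<in>UNIV. \<Sum>a'\<in>UNIV. u $ a' * (g a' a * ginv g a e))"
    by (simp add: lw_def sum_distrib_left mult_ac)
  also have "\<dots> = (\<Sum>a'\<in>UNIV. u $ a' * (\<Sum>a\<in>UNIV. g a' a * ginv g a e))"
    by (subst sum.swap) (simp add: sum_distrib_left)
  also have "\<dots> = u $ e" by (simp add: ginv_rel sum_delta_mult)
  finally show ?thesis .
qed

lemma K1: "(\<Sum>A\<in>Iset nn. E A $ c * lw g (E (bar A)) $ c') = (if c = c' then 1 else 0)"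
proof -
  have h: "axis c' (1::real) = (\<Sum>A\<in>Iset nn. gform g (E (bar A)) (axis c' 1) *\<^sub>R E A)" by (rule expand)
  have "axis c' (1::real) $ c = (\<Sum>A\<in>Iset nn. gform g (E (bar A)) (axis c' 1) *\<^sub>R E A) $ c"
    using h by (rule arg_cong)
  also have "\<dots> = (\<Sum>A\<in>Iset nn. gform g (E (bar A)) (axis c' 1) * E A $ c)"
    by (simp add: sum_component)
  finally have "axis c' (1::real) $ c = (\<Sum>A\<in>Iset nn. gform g (E (bar A)) (axis c' 1) * E A $ c)" .
  moreover have "gform g u (axis c' 1) = lw g u $ c'" for u
    by (simp add: gform_inner inner_axis)
  ultimately show ?thesis by (simp add: axis_def mult.commute)
qed

end

lemma swap4g: "(\<Sum>a\<in>X. \<Sum>b\<in>Y. \<Sum>c\<in>U. \<Sum>d\<in>V. h a b c d) = (\<Sum>c\<in>U. \<Sum>d\<in>V. \<Sum>a\<in>X. \<Sum>b\<in>Y. h a b c d)"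
proof -
  have "(\<Sum>a\<in>X. \<Sum>b\<in>Y. \<Sum>c\<in>U. \<Sum>d\<in>V. h a b c d) = (\<Sum>a\<in>X. \<Sum>c\<in>U. \<Sum>b\<in>Y. \<Sum>d\<in>V. h a b c d)"
    by (rule sum.cong[OF refl], rule sum.swap)
  also have "\<dots> = (\<Sum>c\<in>U. \<Sum>a\<in>X. \<Sum>b\<in>Y. \<Sum>d\<in>V. h a b c d)" by (rule sum.swap)
  also have "\<dots> = (\<Sum>c\<in>U. \<Sum>a\<in>X. \<Sum>d\<in>V. \<Sum>b\<in>Y. h a b c d)"
    by (rule sum.cong[OF refl], rule sum.cong[OF refl], rule sum.swap)
  also have "\<dots> = (\<Sum>c\<in>U. \<Sum>d\<in>V. \<Sum>a\<in>X. \<Sum>b\<in>Y. h a b c d)"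
    by (rule sum.cong[OF refl], rule sum.swap)
  finally show ?thesis .
qed

lemma sum_ifP: "(\<Sum>x\<in>S. if P then f x else 0) = (if P then sum f S else 0)" by auto

lemma sum_delta_mult2: "(\<Sum>x\<in>(UNIV::'d::finite set). f x * (if e = x then 1 else (0::real))) = f e"
proof -
  have "(\<Sum>x\<in>(UNIV::'d set). f x * (if e = x then 1 else (0::real))) = (\<Sum>x\<in>UNIV. if x = e then f x else 0)"
    by (intro sum.cong) auto
  thus ?thesis by simp
qed

lemma LIN:
  fixes K :: "'d::finite \<Rightarrow> 'd \<Rightarrow> real" and S :: "'k set"
  shows "(\<Sum>c\<in>UNIV. \<Sum>d\<in>UNIV. K c d * (\<Sum>k\<in>S. \<Sum>k'\<in>S. h k k' * X k k' c d)) =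
         (\<Sum>k\<in>S. \<Sum>k'\<in>S. h k k' * (\<Sum>c\<in>UNIV. \<Sum>d\<in>UNIV. K c d * X k k' c d))"
proof -
  have "(\<Sum>c\<in>UNIV. \<Sum>d\<in>UNIV. K c d * (\<Sum>k\<in>S. \<Sum>k'\<in>S. h k k' * X k k' c d)) =
        (\<Sum>c\<in>UNIV. \<Sum>d\<in>UNIV. \<Sum>k\<in>S. \<Sum>k'\<in>S. K c d * (h k k' * X k k' c d))"
    by (simp only: sum_distrib_left)
  also have "\<dots> = (\<Sum>k\<in>S. \<Sum>k'\<in>S. \<Sum>c\<in>UNIV. \<Sum>d\<in>UNIV. K c d * (h k k' * X k k' c d))"
    by (rule swap4g)
  also have "\<dots> = (\<Sum>k\<in>S. \<Sum>k'\<in>S. h k k' * (\<Sum>c\<in>UNIV. \<Sum>d\<in>UNIV. K c d * X k k' c d))"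
    by (simp only: sum_distrib_left mult.left_commute)
  finally show ?thesis .
qed

context brg
begin

definition build :: "(fidx \<Rightarrow> fidx \<Rightarrow> real) \<Rightarrow> 'd \<Rightarrow> 'd \<Rightarrow> real" where
  "build z = (\<lambda>c d. \<Sum>C\<in>Iset nn. \<Sum>D\<in>Iset nn. z C D * (E C $ c * E D $ d))"

definition co :: "('d \<Rightarrow> 'd \<Rightarrow> real) \<Rightarrow> fidx \<Rightarrow> fidx \<Rightarrow> real" where
  "co Z A B = (if A \<in> Iset nn \<and> B \<in> Iset nn then
     (\<Sum>c\<in>UNIV. \<Sum>d\<in>UNIV. Z c d * (lw g (E (bar A)) $ c * lw g (E (bar B)) $ d)) else 0)"

lemma Zexp: "build (co Z) = Z"
proof (intro ext)
  fix c d
  have "build (co Z) c d = (\<Sum>C\<in>Iset nn. \<Sum>D\<in>Iset nn. (E C $ c * E D $ d) *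
      (\<Sum>c'\<in>UNIV. \<Sum>d'\<in>UNIV. Z c' d' * (lw g (E (bar C)) $ c' * lw g (E (bar D)) $ d')))"
    unfolding build_def co_def by (intro sum.cong refl) (simp add: mult.commute)
  also have "\<dots> = (\<Sum>c'\<in>UNIV. \<Sum>d'\<in>UNIV. Z c' d' * (\<Sum>C\<in>Iset nn. \<Sum>D\<in>Iset nn.
      (E C $ c * E D $ d) * (lw g (E (bar C)) $ c' * lw g (E (bar D)) $ d')))"
    by (rule LIN[symmetric])
  also have "\<dots> = (\<Sum>c'\<in>UNIV. \<Sum>d'\<in>UNIV. Z c' d' * ((if c = c' then 1 else 0) * (if d = d' then 1 else 0)))"
  proof (intro sum.cong refl)
    fix c' d'
    have "(\<Sum>C\<in>Iset nn. \<Sum>D\<in>Iset nn. (E C $ c * E D $ d) * (lw g (E (bar C)) $ c' * lw g (E (bar D)) $ d'))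
       = (\<Sum>C\<in>Iset nn. E C $ c * lw g (E (bar C)) $ c') * (\<Sum>D\<in>Iset nn. E D $ d * lw g (E (bar D)) $ d')"
      by (simp add: sum_product mult_ac)
    thus "Z c' d' * (\<Sum>C\<in>Iset nn. \<Sum>D\<in>Iset nn. (E C $ c * E D $ d) * (lw g (E (bar C)) $ c' * lw g (E (bar D)) $ d'))
       = Z c' d' * ((if c = c' then 1 else 0) * (if d = d' then 1 else 0))" by (simp add: K1)
  qed
  also have "\<dots> = Z c d"
  proof -
    have "(\<Sum>c'\<in>UNIV. \<Sum>d'\<in>UNIV. Z c' d' * ((if c = c' then 1 else 0) * (if d = d' then 1 else 0)))
        = (\<Sum>c'\<in>UNIV. (\<Sum>d'\<in>UNIV. Z c' d' * (if d = d' then 1 else 0)) * (if c = c' then 1 else 0))"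
      by (intro sum.cong refl) (simp add: sum_distrib_right mult_ac)
    also have "\<dots> = (\<Sum>c'\<in>UNIV. Z c' d * (if c = c' then 1 else 0))"
      by (simp only: sum_delta_mult2)
    also have "\<dots> = Z c d" by (simp only: sum_delta_mult2)
    finally show ?thesis .
  qed
  finally show "build (co Z) c d = Z c d" .
qed

lemma co_build: assumes "A \<in> Iset nn" "B \<in> Iset nn" shows "co (build z) A B = z A B"
proof -
  have "co (build z) A B = (\<Sum>c\<in>UNIV. \<Sum>d\<in>UNIV. (lw g (E (bar A)) $ c * lw g (E (bar B)) $ d) *
       (\<Sum>C\<in>Iset nn. \<Sum>D\<in>Iset nn. z C D * (E C $ c * E D $ d)))"
    unfolding co_def build_def using assms by (simp add: mult.commute)
  also have "\<dots> = (\<Sum>C\<in>Iset nn. \<Sum>D\<in>Iset nn. z C D * (\<Sum>c\<in>UNIV. \<Sum>d\<in>UNIV.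
       (lw g (E (bar A)) $ c * lw g (E (bar B)) $ d) * (E C $ c * E D $ d)))"
    by (rule LIN)
  also have "\<dots> = (\<Sum>C\<in>Iset nn. \<Sum>D\<in>Iset nn. z C D * (gform g (E (bar A)) (E C) * gform g (E (bar B)) (E D)))"
  proof (intro sum.cong refl)
    fix C D
    have "(\<Sum>c\<in>UNIV. \<Sum>d\<in>UNIV. (lw g (E (bar A)) $ c * lw g (E (bar B)) $ d) * (E C $ c * E D $ d))
      = (\<Sum>c\<in>UNIV. lw g (E (bar A)) $ c * E C $ c) * (\<Sum>d\<in>UNIV. lw g (E (bar B)) $ d * E D $ d)"
      by (simp add: sum_product mult_ac)
    thus "z C D * (\<Sum>c\<in>UNIV. \<Sum>d\<in>UNIV. (lw g (E (bar A)) $ c * lw g (E (bar B)) $ d) * (E C $ c * E D $ d))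
      = z C D * (gform g (E (bar A)) (E C) * gform g (E (bar B)) (E D))"
      by (simp add: gform_inner inner_vec_def)
  qed
  also have "\<dots> = (\<Sum>C\<in>Iset nn. \<Sum>D\<in>Iset nn. if C = A then (if D = B then z C D else 0) else 0)"
    by (intro sum.cong refl) (simp add: eta_bar assms)
  also have "\<dots> = z A B" using assms by (simp add: sum_ifP)
  finally show ?thesis .
qed

lemma H1: "(\<Sum>a\<in>UNIV. \<Sum>b\<in>UNIV. (\<Sum>e\<in>UNIV. \<Sum>f\<in>UNIV. ginv g a e * ginv g b f * W e f) *
      (lw g u $ a * lw g v $ b)) = (\<Sum>e\<in>UNIV. \<Sum>f\<in>UNIV. u $ e * v $ f * W e f)"
proof -
  have "(\<Sum>a\<in>UNIV. \<Sum>b\<in>UNIV. (\<Sum>e\<in>UNIV. \<Sum>f\<in>UNIV. ginv g a e * ginv g b f * W e f) *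
      (lw g u $ a * lw g v $ b)) = (\<Sum>a\<in>UNIV. \<Sum>b\<in>UNIV. (lw g u $ a * lw g v $ b) *
      (\<Sum>e\<in>UNIV. \<Sum>f\<in>UNIV. W e f * (ginv g a e * ginv g b f)))"
    by (intro sum.cong refl) (simp add: mult_ac)
  also have "\<dots> = (\<Sum>e\<in>UNIV. \<Sum>f\<in>UNIV. W e f * (\<Sum>a\<in>UNIV. \<Sum>b\<in>UNIV.
      (lw g u $ a * lw g v $ b) * (ginv g a e * ginv g b f)))"
    by (rule LIN)
  also have "\<dots> = (\<Sum>e\<in>UNIV. \<Sum>f\<in>UNIV. u $ e * v $ f * W e f)"
  proof (intro sum.cong refl)
    fix e f
    have "(\<Sum>a\<in>UNIV. \<Sum>b\<in>UNIV. (lw g u $ a * lw g v $ b) * (ginv g a e * ginv g b f))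
      = (\<Sum>a\<in>UNIV. ginv g a e * lw g u $ a) * (\<Sum>b\<in>UNIV. ginv g b f * lw g v $ b)"
      by (simp add: sum_product mult_ac)
    thus "W e f * (\<Sum>a\<in>UNIV. \<Sum>b\<in>UNIV. (lw g u $ a * lw g v $ b) * (ginv g a e * ginv g b f))
      = u $ e * v $ f * W e f" by (simp add: lw_ginv)
  qed
  finally show ?thesis .
qed

lemma CT: assumes "A \<in> Iset nn" "B \<in> Iset nn"
  shows "co (\<lambda>a b. \<Sum>e\<in>UNIV. \<Sum>f\<in>UNIV. ginv g a e * ginv g b f * (\<Sum>c\<in>UNIV. \<Sum>d\<in>UNIV. Q e f c d * Z c d)) A B
    = (\<Sum>C\<in>Iset nn. \<Sum>D\<in>Iset nn. co Z C D * (\<Sum>e\<in>UNIV. \<Sum>f\<in>UNIV. E (bar A) $ e * E (bar B) $ f *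
        (\<Sum>c\<in>UNIV. \<Sum>d\<in>UNIV. Q e f c d * (E C $ c * E D $ d))))"
proof -
  define W where "W = (\<lambda>e f. \<Sum>c\<in>UNIV. \<Sum>d\<in>UNIV. Q e f c d * Z c d)"
  have W2: "W e f = (\<Sum>C\<in>Iset nn. \<Sum>D\<in>Iset nn. co Z C D * (\<Sum>c\<in>UNIV. \<Sum>d\<in>UNIV. Q e f c d * (E C $ c * E D $ d)))" for e f
  proof -
    have "W e f = (\<Sum>c\<in>UNIV. \<Sum>d\<in>UNIV. Q e f c d * build (co Z) c d)" by (simp add: W_def Zexp)
    also have "\<dots> = (\<Sum>C\<in>Iset nn. \<Sum>D\<in>Iset nn. co Z C D * (\<Sum>c\<in>UNIV. \<Sum>d\<in>UNIV. Q e f c d * (E C $ c * E D $ d)))"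
      unfolding build_def by (rule LIN)
    finally show ?thesis .
  qed
  have "co (\<lambda>a b. \<Sum>e\<in>UNIV. \<Sum>f\<in>UNIV. ginv g a e * ginv g b f * W e f) A B
      = (\<Sum>e\<in>UNIV. \<Sum>f\<in>UNIV. E (bar A) $ e * E (bar B) $ f * W e f)"
    using assms by (simp add: co_def H1)
  also have "\<dots> = (\<Sum>e\<in>UNIV. \<Sum>f\<in>UNIV. (E (bar A) $ e * E (bar B) $ f) *
      (\<Sum>C\<in>Iset nn. \<Sum>D\<in>Iset nn. co Z C D * (\<Sum>c\<in>UNIV. \<Sum>d\<in>UNIV. Q e f c d * (E C $ c * E D $ d))))"
    by (simp only: W2)
  also have "\<dots> = (\<Sum>C\<in>Iset nn. \<Sum>D\<in>Iset nn. co Z C D * (\<Sum>e\<in>UNIV. \<Sum>f\<in>UNIV. (E (bar A) $ e * E (bar B) $ f) *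
        (\<Sum>c\<in>UNIV. \<Sum>d\<in>UNIV. Q e f c d * (E C $ c * E D $ d))))"
    by (rule LIN)
  finally show ?thesis by (simp add: W_def)
qed

lemma TC_s: "(\<Sum>e\<in>UNIV. \<Sum>f\<in>UNIV. u $ e * v $ f * (\<Sum>c\<in>UNIV. \<Sum>d\<in>UNIV. T e c f d * (x $ c * y $ d)))
   = tform T u x v y"
proof -
  have "(\<Sum>e\<in>UNIV. \<Sum>f\<in>UNIV. u $ e * v $ f * (\<Sum>c\<in>UNIV. \<Sum>d\<in>UNIV. T e c f d * (x $ c * y $ d)))
     = (\<Sum>e\<in>UNIV. \<Sum>f\<in>UNIV. \<Sum>c\<in>UNIV. \<Sum>d\<in>UNIV. T e c f d * u $ e * x $ c * v $ f * y $ d)"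
    by (simp add: sum_distrib_left mult_ac)
  also have "\<dots> = (\<Sum>e\<in>UNIV. \<Sum>c\<in>UNIV. \<Sum>f\<in>UNIV. \<Sum>d\<in>UNIV. T e c f d * u $ e * x $ c * v $ f * y $ d)"
    by (rule sum.cong[OF refl], rule sum.swap)
  finally show ?thesis by (simp add: tform_def)
qed

lemma TC_b: "(\<Sum>e\<in>UNIV. \<Sum>f\<in>UNIV. u $ e * v $ f * (\<Sum>c\<in>UNIV. \<Sum>d\<in>UNIV. T e f c d * (x $ c * y $ d)))
   = tform T u v x y"
  by (simp add: tform_def sum_distrib_left mult_ac)

lemma Tsop_eq: "Tsop g T Z = (\<lambda>a b. \<Sum>e\<in>UNIV. \<Sum>f\<in>UNIV. ginv g a e * ginv g b f *
    (\<Sum>c\<in>UNIV. \<Sum>d\<in>UNIV. (\<lambda>e f c d. T e c f d) e f c d * Z c d))"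
  by (simp add: Tsop_def sum_distrib_left mult_ac)

lemma Top_eq: "Top g T Z = (\<lambda>a b. (1/2) * (\<Sum>e\<in>UNIV. \<Sum>f\<in>UNIV. ginv g a e * ginv g b f *
    (\<Sum>c\<in>UNIV. \<Sum>d\<in>UNIV. T e f c d * Z c d)))"
  by (simp add: Top_def sum_distrib_left mult_ac)

lemma co_scale: "co (\<lambda>a b. r * X a b) A B = r * co X A B"
  by (simp add: co_def sum_distrib_left mult_ac)

lemma co_Tsop: "co (Tsop g T Z) = Mgen nn (\<lambda>A B C D. fcomp T l nv m (bar A) C (bar B) D) (co Z)"
proof (intro ext)
  fix A B
  show "co (Tsop g T Z) A B = Mgen nn (\<lambda>A B C D. fcomp T l nv m (bar A) C (bar B) D) (co Z) A B"
  proof (cases "A \<in> Iset nn \<and> B \<in> Iset nn")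
    case True
    have "co (Tsop g T Z) A B = (\<Sum>C\<in>Iset nn. \<Sum>D\<in>Iset nn. co Z C D * tform T (E (bar A)) (E C) (E (bar B)) (E D))"
      unfolding Tsop_eq using True by (simp only: CT TC_s)
    thus ?thesis using True by (simp add: Mgen_def fcomp_def mult.commute)
  next
    case False thus ?thesis by (auto simp: co_def Mgen_def)
  qed
qed

lemma co_Top: "co (Top g T Z) = Mgen nn (\<lambda>A B C D. (1/2) * fcomp T l nv m (bar A) (bar B) C D) (co Z)"
proof (intro ext)
  fix A B
  show "co (Top g T Z) A B = Mgen nn (\<lambda>A B C D. (1/2) * fcomp T l nv m (bar A) (bar B) C D) (co Z) A B"
  proof (cases "A \<in> Iset nn \<and> B \<in> Iset nn")
    case True
    have "co (Top g T Z) A B = (1/2) * (\<Sum>C\<in>Iset nn. \<Sum>D\<in>Iset nn. co Z C D * tform T (E (bar A)) (E (bar B)) (E C) (E D))"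
      unfolding Top_eq co_scale using True by (simp only: CT TC_b)
    thus ?thesis using True by (simp add: Mgen_def fcomp_def sum_distrib_left mult_ac)
  next
    case False thus ?thesis by (auto simp: co_def Mgen_def)
  qed
qed

end

lemma tform_asym:
  assumes antisym: "\<And>a b c d. T a b c d = - T b a c d"
  shows "tform T v u w z = - tform T u v w z"
proof -
  have "tform T v u w z = (\<Sum>a\<in>UNIV. \<Sum>b\<in>UNIV. \<Sum>c\<in>UNIV. \<Sum>d\<in>UNIV. T a b c d * v$a * u$b * w$c * z$d)"
    by (simp add: tform_def)
  also have "\<dots> = (\<Sum>b\<in>UNIV. \<Sum>a\<in>UNIV. \<Sum>c\<in>UNIV. \<Sum>d\<in>UNIV. T a b c d * v$a * u$b * w$c * z$d)"
    by (rule sum.swap)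
  also have "\<dots> = (\<Sum>b\<in>UNIV. \<Sum>a\<in>UNIV. \<Sum>c\<in>UNIV. \<Sum>d\<in>UNIV. - (T b a c d * u$b * v$a * w$c * z$d))"
    by (intro sum.cong refl) (subst antisym, simp)
  also have "\<dots> = - tform T u v w z" by (simp add: tform_def sum_negf)
  finally show ?thesis .
qed

lemma tform_psym:
  assumes pairsym: "\<And>a b c d. T a b c d = T c d a b"
  shows "tform T w z u v = tform T u v w z"
proof -
  have "tform T w z u v = (\<Sum>a\<in>UNIV. \<Sum>b\<in>UNIV. \<Sum>c\<in>UNIV. \<Sum>d\<in>UNIV. T a b c d * w$a * z$b * u$c * v$d)"
    by (simp add: tform_def)
  also have "\<dots> = (\<Sum>c\<in>UNIV. \<Sum>d\<in>UNIV. \<Sum>a\<in>UNIV. \<Sum>b\<in>UNIV. T a b c d * w$a * z$b * u$c * v$d)"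
    by (rule swap4)
  also have "\<dots> = tform T u v w z" unfolding tform_def
    by (intro sum.cong refl) (subst pairsym, simp add: mult_ac)
  finally show ?thesis .
qed

context brg begin

lemma co_zero: "co (\<lambda>a b. 0) = (\<lambda>A B. 0)" by (simp add: co_def fun_eq_iff)

lemma co_build_all: assumes "supp nn z" shows "co (build z) = z"
proof (intro ext)
  fix A B show "co (build z) A B = z A B"
    using assms co_build by (cases "A \<in> Iset nn \<and> B \<in> Iset nn") (auto simp: co_def supp_def)
qed

lemma build_sym: assumes "\<And>A B. z A B = s * z B A" shows "build z c d = s * build z d c"
proof -
  have "build z d c = (\<Sum>D\<in>Iset nn. \<Sum>C\<in>Iset nn. z C D * (E C $ d * E D $ c))"
    unfolding build_def by (rule sum.swap)
  hence "s * build z d c = (\<Sum>D\<in>Iset nn. \<Sum>C\<in>Iset nn. s * z C D * (E C $ d * E D $ c))"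
    by (simp add: sum_distrib_left mult_ac)
  also have "\<dots> = build z c d"
  proof -
    have t: "s * z C D * (E C $ d * E D $ c) = z D C * (E D $ c * E C $ d)" for C D
      by (simp only: assms[of D C]) (simp add: mult_ac)
    show ?thesis unfolding build_def by (intro sum.cong refl) (rule t)
  qed
  finally show ?thesis by simp
qed

end

theorem proposition2:
  fixes g :: "'d::finite \<Rightarrow> 'd \<Rightarrow> real"
    and T :: "'d \<Rightarrow> 'd \<Rightarrow> 'd \<Rightarrow> 'd \<Rightarrow> real"
  assumes dim: "CARD('d) \<ge> 2"
    and lor: "lorentzian g"
    and antisym: "\<And>a b c d. T a b c d = - T b a c d"
    and pairsym: "\<And>a b c d. T a b c d = T c d a b"
    and typeII: "\<exists>l nv m. null_frame g l nv m \<and> comps_vanish T l nv m {w. w > 0}"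
    and nilT: "nilpotent_on bivectors (Top g T)"
    and nilTs: "nilpotent_on sym2 (Tsop g T)"
  shows "\<exists>l nv m. null_frame g l nv m \<and> comps_vanish T l nv m {0, 1, 2}"
proof -
  obtain l nv m where nf: "null_frame g l nv m" and tv: "comps_vanish T l nv m {w. w > 0}"
    using typeII by blast
  have gsym: "\<And>a b. g a b = g b a" using lor by (simp add: lorentzian_def)
  define nn where "nn = CARD('d) - 2"
  interpret b: brg g l nv m nn using gsym nf dim nn_def by unfold_locales auto
  define Tf where "Tf = fcomp T l nv m"
  have asymT: "Tf A B C D = - Tf B A C D" for A B C D
    unfolding Tf_def fcomp_def by (rule tform_asym[OF antisym])
  have psymT: "Tf A B C D = Tf C D A B" for A B C D
    unfolding Tf_def fcomp_def by (rule tform_psym[OF pairsym])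
  have posT: "Tf A B C D = 0" if "A \<in> Iset nn" "B \<in> Iset nn" "C \<in> Iset nn" "D \<in> Iset nn"
     "bw A + bw B + bw C + bw D > 0" for A B C D
    using tv that unfolding comps_vanish_def Tf_def Iset_def nn_def by auto
  have itS: "b.co ((Tsop g T ^^ j) Z) = (Mgen nn (\<lambda>A B C D. Tf (bar A) C (bar B) D) ^^ j) (b.co Z)" for j Z
    by (induction j) (simp_all add: b.co_Tsop Tf_def)
  have itB: "b.co ((Top g T ^^ j) Z) = (Mgen nn (\<lambda>A B C D. (1/2) * Tf (bar A) (bar B) C D) ^^ j) (b.co Z)" for j Z
    by (induction j) (simp_all add: b.co_Top Tf_def)
  have nilS: "\<exists>k. \<forall>z. (\<forall>A B. z A B = z B A) \<and> supp nn z \<longrightarrow>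
        (Mgen nn (\<lambda>A B C D. Tf (bar A) C (bar B) D) ^^ k) z = (\<lambda>A B. 0)"
  proof -
    obtain k where k: "\<forall>x\<in>sym2. (Tsop g T ^^ k) x = (\<lambda>a b. 0)"
      using nilTs unfolding nilpotent_on_def by blast
    show ?thesis
    proof (intro exI allI impI)
      fix z :: "fidx \<Rightarrow> fidx \<Rightarrow> real" assume z: "(\<forall>A B. z A B = z B A) \<and> supp nn z"
      have za: "z A B = 1 * z B A" for A B
      proof -
        have "z A B = z B A" using z by blast
        thus ?thesis by simp
      qed
      have "b.build z \<in> sym2" unfolding sym2_def mem_Collect_eq
      proof (intro allI)
        fix a b show "b.build z a b = b.build z b a"
          using b.build_sym[of z 1, OF za, of a b] by simp
      qed
      hence "(Tsop g T ^^ k) (b.build z) = (\<lambda>a b. 0)" using k by blast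
      hence "b.co ((Tsop g T ^^ k) (b.build z)) = (\<lambda>A B. 0)" by (simp add: b.co_zero)
      thus "(Mgen nn (\<lambda>A B C D. Tf (bar A) C (bar B) D) ^^ k) z = (\<lambda>A B. 0)"
        using itS b.co_build_all z by simp
    qed
  qed
  have nilB: "\<exists>k. \<forall>z. (\<forall>A B. z A B = - z B A) \<and> supp nn z \<longrightarrow>
        (Mgen nn (\<lambda>A B C D. (1/2) * Tf (bar A) (bar B) C D) ^^ k) z = (\<lambda>A B. 0)"
  proof -
    obtain k where k: "\<forall>x\<in>bivectors. (Top g T ^^ k) x = (\<lambda>a b. 0)"
      using nilT unfolding nilpotent_on_def by blast
    show ?thesis
    proof (intro exI allI impI)
      fix z :: "fidx \<Rightarrow> fidx \<Rightarrow> real" assume z: "(\<forall>A B. z A B = - z B A) \<and> supp nn z"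
      have za: "z A B = (-1) * z B A" for A B
      proof -
        have "z A B = - z B A" using z by blast
        thus ?thesis by simp
      qed
      have "b.build z \<in> bivectors" unfolding bivectors_def mem_Collect_eq
      proof (intro allI)
        fix a b show "b.build z a b = - b.build z b a"
          using b.build_sym[of z "-1", OF za, of a b] by simp
      qed
      hence "(Top g T ^^ k) (b.build z) = (\<lambda>a b. 0)" using k by blast
      hence "b.co ((Top g T ^^ k) (b.build z)) = (\<lambda>A B. 0)" by (simp add: b.co_zero)
      thus "(Mgen nn (\<lambda>A B C D. (1/2) * Tf (bar A) (bar B) C D) ^^ k) z = (\<lambda>A B. 0)"
        using itB b.co_build_all z by simp
    qed
  qed
  interpret f: frameT nn Tf
    using asymT psymT posT nilS nilB by unfold_locales blast+
  have "comps_vanish T l nv m {0, 1, 2}"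
    using f.final unfolding comps_vanish_def Tf_def Iset_def nn_def by auto
  thus ?thesis using nf by blast
qed

end
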